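(* Suppose $X=\{0,1\}^n$, $R(X)=[0,1]^n$, and $Q:[0,1]^n \to \mathbb{R}$ is an extension of $Q'$ which is component-wise monotone on $[0,1]^n$, i.e., for each $i \in [n]$, $Q$ is either nondecreasing in $x_i$ or nonincreasing in $x_i$ (with the other coordinates fixed). Let $I \subseteq [n]$ be nonempty and let $\mu\in\mathbb{R}^n$, $\eta\in\mathbb{R}$ with $\mu_i=0$ for all $i\notin I$. Then the inequality $\theta\geq \mu^T \mathbf{x}+\eta$ is valid for $E=\{(\theta,\mathbf{x})\in\mathbb{R}\times X:\theta\geq Q'(\mathbf{x})\}$ if and only if it is valid for $E_I^Q$.
   Context: $Q':\{0,1\}^n\to\mathbb{R}$ is a function, and $Q$ is an extension of $Q'$ to $[0,1]^n$, i.e., $Q(\mathbf{x})=Q'(\mathbf{x})$ for $\mathbf{x}\in\{0,1\}^n$. Let $E^Q := \{(\theta,\mathbf{x}) \in \mathbb{R}\times [0,1]^n : \theta \geq Q(\mathbf{x})\}$. For $I \subseteq [n]$ and $\chi \in \{0,1\}^I$, $E_I^Q(\chi) := \{(\theta,\mathbf{x}) \in E^Q : \mathbf{x}_I = \chi\}$ and $E_I^Q := \bigcup_{\chi \in \{0,1\}^I} E_I^Q(\chi)$, where $\mathbf{x}_I$ is the subvector of $\mathbf{x}$ indexed by $I$. *)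

theory Defs
  imports "HOL-Analysis.Analysis"
begin

text \<open>Dimension n = CARD('n); vectors in R^n are real^'n; indices [n] are elements of 'n.\<close>

definition binary_points :: "(real^'n) set" where
  "binary_points = {x. \<forall>i. x$i \<in> {0,1}}"

definition unit_cube :: "(real^'n) set" where
  "unit_cube = {x. \<forall>i. 0 \<le> x$i \<and> x$i \<le> 1}"

definition is_extension :: "(real^'n \<Rightarrow> real) \<Rightarrow> (real^'n \<Rightarrow> real) \<Rightarrow> bool" where
  "is_extension Q Q' \<longleftrightarrow> (\<forall>x\<in>binary_points. Q x = Q' x)"

definition componentwise_monotone :: "(real^'n \<Rightarrow> real) \<Rightarrow> bool" where
  "componentwise_monotone Q \<longleftrightarrow>
    (\<forall>i. (\<forall>x\<in>unit_cube. \<forall>y\<in>unit_cube. (\<forall>j. j \<noteq> i \<longrightarrow> x$j = y$j) \<and> x$i \<le> y$i \<longrightarrow> Q x \<le> Q y)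
       \<or> (\<forall>x\<in>unit_cube. \<forall>y\<in>unit_cube. (\<forall>j. j \<noteq> i \<longrightarrow> x$j = y$j) \<and> x$i \<le> y$i \<longrightarrow> Q x \<ge> Q y))"

definition E_set :: "(real^'n \<Rightarrow> real) \<Rightarrow> (real \<times> (real^'n)) set" where
  "E_set Q' = {(\<theta>, x). x \<in> binary_points \<and> \<theta> \<ge> Q' x}"

definition EQ :: "(real^'n \<Rightarrow> real) \<Rightarrow> (real \<times> (real^'n)) set" where
  "EQ Q = {(\<theta>, x). x \<in> unit_cube \<and> \<theta> \<ge> Q x}"

definition EQ_I_chi :: "(real^'n \<Rightarrow> real) \<Rightarrow> 'n set \<Rightarrow> ('n \<Rightarrow> real) \<Rightarrow> (real \<times> (real^'n)) set" where
  "EQ_I_chi Q I ch = {p \<in> EQ Q. \<forall>i\<in>I. (snd p)$i = ch i}"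

definition EQ_I :: "(real^'n \<Rightarrow> real) \<Rightarrow> 'n set \<Rightarrow> (real \<times> (real^'n)) set" where
  "EQ_I Q I = (\<Union>ch\<in>{ch. \<forall>i\<in>I. ch i \<in> {0,1}}. EQ_I_chi Q I ch)"

definition valid_ineq :: "real^'n \<Rightarrow> real \<Rightarrow> (real \<times> (real^'n)) set \<Rightarrow> bool" where
  "valid_ineq \<mu> \<eta> S \<longleftrightarrow> (\<forall>(\<theta>, x)\<in>S. \<theta> \<ge> \<mu> \<bullet> x + \<eta>)"

end

theory Submission
  imports Defs
begin

lemma round_one:
  assumes cm: "componentwise_monotone Q" and x: "x \<in> unit_cube"
  shows "\<exists>c\<in>{0,1::real}. Q (\<chi> j. if j = a then c else x$j) \<le> Q x"
proof -
  define x0 where "x0 = (\<chi> j. if j = a then (0::real) else x$j)"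
  define x1 where "x1 = (\<chi> j. if j = a then (1::real) else x$j)"
  have c0: "x0 \<in> unit_cube" "x1 \<in> unit_cube" using x by (auto simp: unit_cube_def x0_def x1_def)
  have a0: "x0$a \<le> x$a" "x$a \<le> x1$a" using x by (auto simp: unit_cube_def x0_def x1_def)
  have o: "\<forall>j. j \<noteq> a \<longrightarrow> x0$j = x$j" "\<forall>j. j \<noteq> a \<longrightarrow> x$j = x1$j" by (auto simp: x0_def x1_def)
  from cm[unfolded componentwise_monotone_def, rule_format, of a] show ?thesis
  proof
    assume h: "\<forall>x\<in>unit_cube. \<forall>y\<in>unit_cube. (\<forall>j. j \<noteq> a \<longrightarrow> x$j = y$j) \<and> x$a \<le> y$a \<longrightarrow> Q x \<le> Q y"
    have "Q x0 \<le> Q x" using h c0 x a0 o by blast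
    then show ?thesis unfolding x0_def by auto
  next
    assume h: "\<forall>x\<in>unit_cube. \<forall>y\<in>unit_cube. (\<forall>j. j \<noteq> a \<longrightarrow> x$j = y$j) \<and> x$a \<le> y$a \<longrightarrow> Q x \<ge> Q y"
    have "Q x1 \<le> Q x" using h c0 x a0 o by blast
    then show ?thesis unfolding x1_def by auto
  qed
qed

lemma round_set:
  assumes cm: "componentwise_monotone Q" and fin: "finite S"
  shows "\<forall>x\<in>unit_cube. \<exists>y\<in>unit_cube. (\<forall>j. j \<notin> S \<longrightarrow> y$j = x$j) \<and> (\<forall>j\<in>S. y$j \<in> {0,1}) \<and> Q y \<le> Q x"
  using fin
proof (induction S rule: finite_induct)
  case empty
  then show ?case by auto
next
  case (insert a S)
  show ?case
  proof
    fix x :: "real^'a" assume x: "x \<in> unit_cube"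
    obtain c where c: "c \<in> {0,1::real}" and q: "Q (\<chi> j. if j = a then c else x$j) \<le> Q x"
      using round_one[OF cm x] by blast
    define x' where "x' = (\<chi> j. if j = a then c else x$j)"
    have x': "x' \<in> unit_cube" using x c by (auto simp: unit_cube_def x'_def)
    obtain y where y: "y \<in> unit_cube" "\<forall>j. j \<notin> S \<longrightarrow> y$j = x'$j" "\<forall>j\<in>S. y$j \<in> {0,1}" "Q y \<le> Q x'"
      using insert.IH x' by blast
    have "\<forall>j. j \<notin> insert a S \<longrightarrow> y$j = x$j" using y(2) by (auto simp: x'_def)
    moreover have "\<forall>j\<in>insert a S. y$j \<in> {0,1}" using y(2,3) c insert.hyps(2) by (auto simp: x'_def)
    moreover have "Q y \<le> Q x" using y(4) q by (simp add: x'_def)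
    ultimately show "\<exists>y\<in>unit_cube. (\<forall>j. j \<notin> insert a S \<longrightarrow> y$j = x$j) \<and> (\<forall>j\<in>insert a S. y$j \<in> {0,1}) \<and> Q y \<le> Q x"
      using y(1) by blast
  qed
qed

theorem corollary1:
  fixes Q Q' :: "real^'n \<Rightarrow> real" and I :: "'n set" and \<mu> :: "real^'n" and \<eta> :: real
  assumes "is_extension Q Q'"
    and "componentwise_monotone Q"
    and "I \<noteq> {}"
    and "\<forall>i. i \<notin> I \<longrightarrow> \<mu>$i = 0"
  shows "valid_ineq \<mu> \<eta> (E_set Q') \<longleftrightarrow> valid_ineq \<mu> \<eta> (EQ_I Q I)"
proof
  assume v: "valid_ineq \<mu> \<eta> (EQ_I Q I)"
  show "valid_ineq \<mu> \<eta> (E_set Q')"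
    unfolding valid_ineq_def
  proof (clarify)
    fix \<theta> x assume "(\<theta>, x) \<in> E_set Q'"
    then have b: "x \<in> binary_points" and t: "\<theta> \<ge> Q' x" by (auto simp: E_set_def)
    have "x \<in> unit_cube" unfolding unit_cube_def
    proof (intro CollectI allI)
      fix i have "x$i \<in> {0,1}" using b by (simp add: binary_points_def)
      then show "0 \<le> x$i \<and> x$i \<le> 1" by auto
    qed
    moreover have "Q x = Q' x" using assms(1) b by (simp add: is_extension_def)
    ultimately have "(\<theta>, x) \<in> EQ_I_chi Q I (\<lambda>i. x$i)" using t by (simp add: EQ_I_chi_def EQ_def)
    moreover have "\<forall>i\<in>I. x$i \<in> {0,1}" using b by (simp add: binary_points_def)
    ultimately have "(\<theta>, x) \<in> EQ_I Q I" unfolding EQ_I_def by blast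
    then show "\<mu> \<bullet> x + \<eta> \<le> \<theta>" using v unfolding valid_ineq_def by blast
  qed
next
  assume v: "valid_ineq \<mu> \<eta> (E_set Q')"
  show "valid_ineq \<mu> \<eta> (EQ_I Q I)"
    unfolding valid_ineq_def
  proof (clarify)
    fix \<theta> x assume "(\<theta>, x) \<in> EQ_I Q I"
    then obtain ch where ch: "\<forall>i\<in>I. ch i \<in> {0,1}" and m: "(\<theta>, x) \<in> EQ_I_chi Q I ch"
      unfolding EQ_I_def by blast
    then have xc: "x \<in> unit_cube" and t: "\<theta> \<ge> Q x" and xi: "\<forall>i\<in>I. x$i = ch i"
      by (auto simp: EQ_I_chi_def EQ_def)
    obtain y where y: "y \<in> unit_cube" "\<forall>j. j \<notin> UNIV - I \<longrightarrow> y$j = x$j"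
        "\<forall>j\<in>UNIV - I. y$j \<in> {0,1}" "Q y \<le> Q x"
      using round_set[OF assms(2) finite[of "UNIV - I"]] xc by blast
    have yb: "y \<in> binary_points" unfolding binary_points_def
    proof (intro CollectI allI)
      fix i show "y$i \<in> {0,1}"
      proof (cases "i \<in> I")
        case True then show ?thesis using y(2) xi ch by auto
      next
        case False then show ?thesis using y(3) by auto
      qed
    qed
    then have "(Q' y, y) \<in> E_set Q'" by (simp add: E_set_def)
    then have "\<mu> \<bullet> y + \<eta> \<le> Q' y" using v unfolding valid_ineq_def by blast
    moreover have "Q' y = Q y" using assms(1) yb by (simp add: is_extension_def)
    moreover have "\<mu> \<bullet> y = \<mu> \<bullet> x"
      unfolding inner_vec_def
    proof (rule sum.cong[OF refl])
      fix i :: 'n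
      show "inner (\<mu>$i) (y$i) = inner (\<mu>$i) (x$i)"
      proof (cases "i \<in> I")
        case True then show ?thesis using y(2) by simp
      next
        case False then show ?thesis using assms(4) by simp
      qed
    qed
    ultimately show "\<mu> \<bullet> x + \<eta> \<le> \<theta>" using y(4) t by linarith
  qed
qed

end
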